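(* Consider any of the three variants (F, O, T) of the two-round protocol described in the context, with parameters $\epsilon_1,\epsilon_2\ge 0$, $d_{max}\in\mathbb Z_{\ge0}$, $\mu\in[0,\frac{e^{\epsilon_1}}{e^{\epsilon_1}+1}]$, where all neighbor lists considered have at most $d_{max}$ ones. For $i\in[n]$ let $\mathcal R_i^1$ be the first-round randomizer of $v_i$ (mapping $\mathbf a_i$ to $\mathbf r_i$) and $\mathcal R_i^2(M_i)$ the second-round randomizer (mapping $\mathbf a_i$ to $\hat w_i$, given the message $M_i$), and let $\mathcal R_i(\mathbf a_i)=(\mathcal R_i^1(\mathbf a_i),\mathcal R_i^2(M_i)(\mathbf a_i))$. Then each $\mathcal R_i$ satisfies $(\epsilon_1+\epsilon_2)$-edge LDP, and $(\mathcal R_1,\dots,\mathcal R_n)$ satisfies $(\epsilon_1+\epsilon_2)$-relationship DP.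
   Context: Let $G$ be a simple undirected graph on $V=\{v_1,\dots,v_n\}$ with symmetric adjacency matrix $\mathbf A=(a_{i,j})\in\{0,1\}^{n\times n}$, $a_{i,i}=0$; $\mathbf a_i$ is the $i$-th row (neighbor list of $v_i$). $ARR_{\epsilon,\mu}:\{0,1\}\to\{0,1\}$ is the randomized map with $\Pr[ARR_{\epsilon,\mu}(1)=1]=\mu$ and $\Pr[ARR_{\epsilon,\mu}(0)=1]=\mu e^{-\epsilon}$. Protocol: let $\rho=e^{-\epsilon_1}$ and $\mu^*=\mu,\mu^2,\mu^3$ in variants F, O, T respectively. Round 1: each $v_i$ computes $r_{i,j}=ARR_{\epsilon_1,\mu}(a_{i,j})$ for all $j<i$ (all independent) and sends $\mathbf r_i=(r_{i,1},\dots,r_{i,i-1})$. The server forms the set of unordered pairs $E'=\{\{v_j,v_k\}: j<k,\ r_{k,j}=1\}$. Round 2: the server sends $v_i$ the message $M_i=\{\{v_j,v_k\}\in E': j<k<i\}$ (F), $M_i=\{\{v_j,v_k\}\in E':\{v_i,v_k\}\in E',\ j<k<i\}$ (O), or $M_i=\{\{v_j,v_k\}\in E':\{v_i,v_j\}\in E',\{v_i,v_k\}\in E',\ j<k<i\}$ (T). User $v_i$ computes $t_i=|\{(j,k):j<k<i,\ a_{i,j}=a_{i,k}=1,\ \{v_j,v_k\}\in M_i\}|$, $s_i=|\{(j,k):j<k<i,\ a_{i,j}=a_{i,k}=1\}|$, $w_i=t_i-\mu^*\rho s_i$, and sends $\hat w_i=w_i+\mathrm{Lap}(d_{max}/\epsilon_2)$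 (Laplace noise with mean 0 and scale $d_{max}/\epsilon_2$, independent). The server outputs $\hat f_\triangle(G)=\frac{1}{\mu^*(1-\rho)}\sum_{i=1}^n\hat w_i$. Definitions: a local randomizer $\mathcal R$ on $\{0,1\}^n$ satisfies $\epsilon$-edge LDP if $\Pr[\mathcal R(\mathbf a)=s]\le e^\epsilon\Pr[\mathcal R(\mathbf a')=s]$ for all $\mathbf a,\mathbf a'$ differing in one bit and all outputs $s$. A tuple $(\mathcal R_1,\dots,\mathcal R_n)$ (independent randomness) satisfies $\epsilon$-relationship DP if for all graphs $G,G'$ on $V$ differing in exactly one edge, with adjacency rows $\mathbf a_i,\mathbf a_i'$, and all output tuples $(s_1,\dots,s_n)$, $\Pr[(\mathcal R_1(\mathbf a_1),\dots,\mathcal R_n(\mathbf a_n))=(s_1,\dots,s_n)]\le e^\epsilon\Pr[(\mathcal R_1(\mathbf a_1'),\dots,\mathcal R_n(\mathbf a_n'))=(s_1,\dots,s_n)]$. *)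

theory Defs
  imports "HOL-Probability.Probability"
begin

text \<open>Vertices are v_0, ..., v_(n-1) (0-indexed). A neighbor list of a user is a
  function ai :: nat => bool (only indices below n are meaningful).
  Pairs {v_j, v_k} with j < k are encoded as ordered pairs (j, k).\<close>

datatype variant = VarF | VarO | VarT

definition mu_star :: "variant \<Rightarrow> real \<Rightarrow> real" where
  "mu_star v \<mu> = (case v of VarF \<Rightarrow> \<mu> | VarO \<Rightarrow> \<mu>^2 | VarT \<Rightarrow> \<mu>^3)"

definition ARR :: "real \<Rightarrow> real \<Rightarrow> bool \<Rightarrow> bool pmf" where
  "ARR eps \<mu> b = bernoulli_pmf (if b then \<mu> else \<mu> * exp (- eps))"

definition laplace :: "real \<Rightarrow> real measure" where
  "laplace b = (if b = 0 then return borel 0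
     else density lborel (\<lambda>x. ennreal (exp (- \<bar>x\<bar> / b) / (2 * b))))"

definition round1 :: "real \<Rightarrow> real \<Rightarrow> nat \<Rightarrow> (nat \<Rightarrow> bool) \<Rightarrow> (nat \<Rightarrow> bool) pmf" where
  "round1 eps1 \<mu> i ai = Pi_pmf {..<i} False (\<lambda>j. ARR eps1 \<mu> (ai j))"

text \<open>Noisy-graph edge set E' from the round-1 reports r (r k j = r_(k,j)).\<close>
definition noisy_edges :: "nat \<Rightarrow> (nat \<Rightarrow> nat \<Rightarrow> bool) \<Rightarrow> (nat \<times> nat) set" where
  "noisy_edges n r = {(j, k). j < k \<and> k < n \<and> r k j}"

definition message :: "variant \<Rightarrow> nat \<Rightarrow> (nat \<times> nat) set \<Rightarrow> (nat \<times> nat) set" where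
  "message v i E' = (case v of
      VarF \<Rightarrow> {(j, k). (j, k) \<in> E' \<and> j < k \<and> k < i}
    | VarO \<Rightarrow> {(j, k). (j, k) \<in> E' \<and> (k, i) \<in> E' \<and> j < k \<and> k < i}
    | VarT \<Rightarrow> {(j, k). (j, k) \<in> E' \<and> (j, i) \<in> E' \<and> (k, i) \<in> E' \<and> j < k \<and> k < i})"

definition t_count :: "nat \<Rightarrow> (nat \<Rightarrow> bool) \<Rightarrow> (nat \<times> nat) set \<Rightarrow> nat" where
  "t_count i ai M = card {(j, k). j < k \<and> k < i \<and> ai j \<and> ai k \<and> (j, k) \<in> M}"

definition s_count :: "nat \<Rightarrow> (nat \<Rightarrow> bool) \<Rightarrow> nat" where
  "s_count i ai = card {(j, k). j < k \<and> k < i \<and> ai j \<and> ai k}"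

definition w_val :: "variant \<Rightarrow> real \<Rightarrow> real \<Rightarrow> nat \<Rightarrow> (nat \<Rightarrow> bool) \<Rightarrow> (nat \<times> nat) set \<Rightarrow> real" where
  "w_val v eps1 \<mu> i ai M =
     real (t_count i ai M) - mu_star v \<mu> * exp (- eps1) * real (s_count i ai)"

definition round2 :: "variant \<Rightarrow> real \<Rightarrow> real \<Rightarrow> real \<Rightarrow> nat \<Rightarrow> nat \<Rightarrow> (nat \<times> nat) set
    \<Rightarrow> (nat \<Rightarrow> bool) \<Rightarrow> real measure" where
  "round2 v eps1 eps2 \<mu> dmax i M ai =
     distr (laplace (real dmax / eps2)) borel (\<lambda>x. w_val v eps1 \<mu> i ai M + x)"

definition user_rand :: "variant \<Rightarrow> real \<Rightarrow> real \<Rightarrow> real \<Rightarrow> nat \<Rightarrow> nat \<Rightarrow> (nat \<times> nat) set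
    \<Rightarrow> (nat \<Rightarrow> bool) \<Rightarrow> ((nat \<Rightarrow> bool) \<times> real) measure" where
  "user_rand v eps1 eps2 \<mu> dmax i M ai =
     measure_pmf (round1 eps1 \<mu> i ai) \<Otimes>\<^sub>M round2 v eps1 eps2 \<mu> dmax i M ai"

definition protocol :: "variant \<Rightarrow> real \<Rightarrow> real \<Rightarrow> real \<Rightarrow> nat \<Rightarrow> nat \<Rightarrow> (nat \<Rightarrow> nat \<Rightarrow> bool)
    \<Rightarrow> ((nat \<Rightarrow> nat \<Rightarrow> bool) \<times> (nat \<Rightarrow> real)) measure" where
  "protocol v eps1 eps2 \<mu> dmax n A =
     measure_pmf (Pi_pmf {..<n} (\<lambda>_. False) (\<lambda>i. round1 eps1 \<mu> i (A i))) \<bind>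
       (\<lambda>r. distr (PiM {..<n} (\<lambda>i. round2 v eps1 eps2 \<mu> dmax i
                                 (message v i (noisy_edges n r)) (A i)))
                   (count_space UNIV \<Otimes>\<^sub>M PiM {..<n} (\<lambda>_. borel))
                   (\<lambda>w. (r, w)))"

definition rows_differ_one :: "nat \<Rightarrow> (nat \<Rightarrow> bool) \<Rightarrow> (nat \<Rightarrow> bool) \<Rightarrow> bool" where
  "rows_differ_one n a a' =
     (\<exists>k<n. a k \<noteq> a' k \<and> (\<forall>j<n. j \<noteq> k \<longrightarrow> a j = a' j))"

definition edge_LDP :: "nat \<Rightarrow> real \<Rightarrow> (nat \<Rightarrow> bool) set \<Rightarrow> ((nat \<Rightarrow> bool) \<Rightarrow> 'b measure) \<Rightarrow> bool" where
  "edge_LDP n eps D R =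
     (\<forall>a\<in>D. \<forall>a'\<in>D. rows_differ_one n a a' \<longrightarrow>
        (\<forall>S \<in> sets (R a). measure (R a) S \<le> exp eps * measure (R a') S))"

definition simple_graph :: "nat \<Rightarrow> (nat \<Rightarrow> nat \<Rightarrow> bool) \<Rightarrow> bool" where
  "simple_graph n A = (\<forall>i<n. \<forall>j<n. A i j = A j i \<and> \<not> A i i)"

definition max_deg_le :: "nat \<Rightarrow> nat \<Rightarrow> (nat \<Rightarrow> nat \<Rightarrow> bool) \<Rightarrow> bool" where
  "max_deg_le n dmax A = (\<forall>i<n. card {j. j < n \<and> A i j} \<le> dmax)"

definition graphs_differ_one_edge :: "nat \<Rightarrow> (nat \<Rightarrow> nat \<Rightarrow> bool) \<Rightarrow> (nat \<Rightarrow> nat \<Rightarrow> bool) \<Rightarrow> bool" where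
  "graphs_differ_one_edge n A A' =
     (\<exists>u<n. \<exists>w<n. u \<noteq> w \<and> A u w \<noteq> A' u w \<and>
        (\<forall>i<n. \<forall>j<n. {i, j} \<noteq> {u, w} \<longrightarrow> A i j = A' i j))"

definition relationship_DP :: "nat \<Rightarrow> nat \<Rightarrow> real \<Rightarrow> ((nat \<Rightarrow> nat \<Rightarrow> bool) \<Rightarrow> 'b measure) \<Rightarrow> bool" where
  "relationship_DP n dmax eps P =
     (\<forall>A A'. simple_graph n A \<and> simple_graph n A' \<and> max_deg_le n dmax A \<and> max_deg_le n dmax A'
        \<and> graphs_differ_one_edge n A A' \<longrightarrow>
        (\<forall>S \<in> sets (P A). measure (P A) S \<le> exp eps * measure (P A') S))"

end

theory Submission
  imports Defs
begin


definition lapd :: "real \<Rightarrow> real \<Rightarrow> real" where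
  "lapd b x = exp (- \<bar>x\<bar> / b) / (2 * b)"

lemma lap_shift:
  fixes b e c c' :: real
  assumes b: "b > 0" and cc: "\<bar>c - c'\<bar> \<le> b * e" and A[measurable]: "A \<in> sets borel"
  shows "emeasure (distr (laplace b) borel (\<lambda>x. c + x)) A
       \<le> ennreal (exp e) * emeasure (distr (laplace b) borel (\<lambda>x. c' + x)) A"
proof -
  have key: "\<And>c. emeasure (distr (laplace b) borel (\<lambda>x. c + x)) A
        = (\<integral>\<^sup>+ y. ennreal (lapd b (y - c)) * indicator A y \<partial>lborel)"
  proof -
    fix c :: real
    have m: "(\<lambda>x. c + x) \<in> measurable (laplace b) borel"
      using b by (simp add: laplace_def)
    have "emeasure (distr (laplace b) borel (\<lambda>x. c + x)) A
        = emeasure (laplace b) ((\<lambda>x. c + x) -` A \<inter> space (laplace b))"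
      by (rule emeasure_distr[OF m A])
    also have "\<dots> = (\<integral>\<^sup>+ x. ennreal (lapd b x) * indicator ((\<lambda>x. c + x) -` A) x \<partial>lborel)"
    proof -
      have m': "(\<lambda>x. c + x) \<in> measurable borel borel" by simp
      have pre: "(\<lambda>x. c + x) -` A \<in> sets lborel"
        using measurable_sets[OF m' A] by simp
      show ?thesis using b
        by (simp add: laplace_def lapd_def emeasure_density[OF _ pre])
    qed
    also have "\<dots> = (\<integral>\<^sup>+ x. (\<lambda>y. ennreal (lapd b (y - c)) * indicator A y) (c + 1 * x) \<partial>lborel)"
      by (auto intro!: nn_integral_cong simp: indicator_def)
    also have "\<dots> = (\<integral>\<^sup>+ y. ennreal (lapd b (y - c)) * indicator A y \<partial>lborel)"
      using nn_integral_real_affine[of "\<lambda>y. ennreal (lapd b (y - c)) * indicator A y" 1 c]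
      by (simp add: lapd_def)
    finally show "emeasure (distr (laplace b) borel (\<lambda>x. c + x)) A
        = (\<integral>\<^sup>+ y. ennreal (lapd b (y - c)) * indicator A y \<partial>lborel)" .
  qed
  have pw: "lapd b (y - c) \<le> exp e * lapd b (y - c')" for y
  proof -
    have "- \<bar>y - c\<bar> / b \<le> e + - \<bar>y - c'\<bar> / b"
    proof -
      have "\<bar>y - c'\<bar> - \<bar>y - c\<bar> \<le> b * e" using cc by linarith
      hence "(\<bar>y - c'\<bar> - \<bar>y - c\<bar>) / b \<le> e" using b by (simp add: divide_le_eq mult.commute)
      thus ?thesis by (simp add: diff_divide_distrib)
    qed
    hence "exp (- \<bar>y - c\<bar> / b) \<le> exp e * exp (- \<bar>y - c'\<bar> / b)"
      by (simp add: exp_add[symmetric])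
    thus ?thesis using b unfolding lapd_def by (simp add: divide_right_mono mult.assoc[symmetric]
        del: exp_le_cancel_iff)
  qed
  have "(\<integral>\<^sup>+ y. ennreal (lapd b (y - c)) * indicator A y \<partial>lborel)
      \<le> (\<integral>\<^sup>+ y. ennreal (exp e) * (ennreal (lapd b (y - c')) * indicator A y) \<partial>lborel)"
  proof (rule nn_integral_mono)
    fix y
    have "ennreal (lapd b (y - c)) \<le> ennreal (exp e * lapd b (y - c'))"
      using pw by (rule ennreal_leI)
    also have "\<dots> = ennreal (exp e) * ennreal (lapd b (y - c'))"
      by (rule ennreal_mult) (auto simp: lapd_def b intro: less_imp_le)
    finally show "ennreal (lapd b (y - c)) * indicator A y \<le> ennreal (exp e) * (ennreal (lapd b (y - c')) * indicator A y)"
      by (auto simp: indicator_def)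
  qed
  also have "\<dots> = ennreal (exp e) * (\<integral>\<^sup>+ y. ennreal (lapd b (y - c')) * indicator A y \<partial>lborel)"
    by (rule nn_integral_cmult) (simp add: lapd_def)
  finally show ?thesis by (simp add: key)
qed

lemma lap_half: assumes b: "b > 0"
  shows "(\<integral>\<^sup>+ x. ennreal (lapd b x) * indicator {0..} x \<partial>lborel) = ennreal (1/2)"
proof -
  let ?ed = "exponential_density (1/b)"
  interpret P: prob_space "density lborel ?ed" using b by (intro prob_space_exponential_density) simp
  have "emeasure (density lborel ?ed) UNIV = 1"
    using P.emeasure_space_1 by simp
  hence H: "(\<integral>\<^sup>+ x. ennreal (?ed x) \<partial>lborel) = 1"
    by (subst (asm) emeasure_density) auto
  have "(\<integral>\<^sup>+ x. ennreal (lapd b x) * indicator {0..} x \<partial>lborel)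
      = (\<integral>\<^sup>+ x. ennreal (1/2) * ennreal (?ed x) \<partial>lborel)"
  proof (rule nn_integral_cong)
    fix x :: real
    show "ennreal (lapd b x) * indicator {0..} x = ennreal (1/2) * ennreal (?ed x)"
    proof (cases "x \<ge> 0")
      case True
      hence h: "lapd b x = 1/2 * ?ed x" using b
        by (simp add: lapd_def exponential_density_def)
      have "?ed x \<ge> 0" using b by (simp add: exponential_density_def)
      have "ennreal (lapd b x) = ennreal (1/2 * ?ed x)" by (simp only: h)
      also have "\<dots> = ennreal (1/2) * ennreal (?ed x)"
        by (rule ennreal_mult) (use \<open>?ed x \<ge> 0\<close> in auto)
      finally have "ennreal (lapd b x) = ennreal (1/2) * ennreal (?ed x)" .
      thus ?thesis using True by simp
    next
      case False thus ?thesis by (simp add: exponential_density_def)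
    qed
  qed
  also have "\<dots> = ennreal (1/2)" using H by (subst nn_integral_cmult) auto
  finally show ?thesis .
qed

lemma lap_prob: assumes b: "b > 0" shows "prob_space (laplace b)"
proof -
  have m[measurable]: "(\<lambda>x. ennreal (lapd b x)) \<in> borel_measurable borel" by (simp add: lapd_def)
  have split: "(\<integral>\<^sup>+ x. ennreal (lapd b x) \<partial>lborel)
     = (\<integral>\<^sup>+ x. ennreal (lapd b x) * indicator {0..} x \<partial>lborel)
       + (\<integral>\<^sup>+ x. ennreal (lapd b x) * indicator {..<0} x \<partial>lborel)"
    by (subst nn_integral_add[symmetric]) (auto intro!: nn_integral_cong simp: indicator_def)
  have "(\<integral>\<^sup>+ x. ennreal (lapd b x) * indicator {..<0} x \<partial>lborel)
      = (\<integral>\<^sup>+ x. (\<lambda>x. ennreal (lapd b x) * indicator {..<0} x) (0 + (-1) * x) \<partial>lborel)"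
    using nn_integral_real_affine[of "\<lambda>x. ennreal (lapd b x) * indicator {..<0} x" "-1" 0] by simp
  also have "\<dots> = (\<integral>\<^sup>+ x. ennreal (lapd b x) * indicator {0..} x \<partial>lborel)"
    by (intro nn_integral_cong_AE eventually_mono[OF AE_lborel_singleton[of 0]])
       (auto simp: indicator_def lapd_def)
  finally have neg: "(\<integral>\<^sup>+ x. ennreal (lapd b x) * indicator {..<0} x \<partial>lborel) = ennreal (1/2)"
    using lap_half[OF b] by simp
  have tot: "(\<integral>\<^sup>+ x. ennreal (lapd b x) \<partial>lborel) = 1"
  proof -
    have e: "ennreal (1/2) + ennreal (1/2) = ennreal 1"
      by (subst ennreal_plus[symmetric]) auto
    show ?thesis using split neg lap_half[OF b] e by (simp only: ennreal_1)
  qed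
  show ?thesis
  proof (rule prob_spaceI)
    have "emeasure (laplace b) (space (laplace b)) = (\<integral>\<^sup>+ x. ennreal (lapd b x) * indicator UNIV x \<partial>lborel)"
      using b by (simp add: laplace_def emeasure_density lapd_def)
    thus "emeasure (laplace b) (space (laplace b)) = 1" using tot by simp
  qed
qed



lemma prod_ratio:
  fixes f g :: "'a \<Rightarrow> real"
  assumes "finite I" "\<And>j. j \<in> I \<Longrightarrow> j \<noteq> k \<Longrightarrow> f j = g j"
    "k \<in> I \<Longrightarrow> f k \<le> c * g k" "c \<ge> 1" "\<And>j. j \<in> I \<Longrightarrow> f j \<ge> 0" "\<And>j. j \<in> I \<Longrightarrow> g j \<ge> 0"
  shows "prod f I \<le> c * prod g I"
proof (cases "k \<in> I")
  case True
  have eq: "prod f (I - {k}) = prod g (I - {k})" using assms(2) by (intro prod.cong) auto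
  have "prod f I = f k * prod f (I - {k})" using True assms(1) by (simp add: prod.remove)
  also have "\<dots> \<le> (c * g k) * prod g (I - {k})"
  proof -
    have "prod g (I - {k}) \<ge> 0" using assms(6) by (intro prod_nonneg) auto
    hence "f k * prod g (I - {k}) \<le> (c * g k) * prod g (I - {k})"
      using assms(3) True by (intro mult_right_mono) auto
    thus ?thesis using eq by simp
  qed
  also have "\<dots> = c * prod g I" using True assms(1) by (simp add: prod.remove)
  finally show ?thesis .
next
  case False
  have "prod f I = prod g I" using assms(2) False by (intro prod.cong) auto
  moreover have "prod g I \<ge> 0" using assms by (auto intro: prod_nonneg)
  ultimately show ?thesis using assms(4) by (metis mult_le_cancel_right1 order_refl nle_le mult_right_mono mult_1)
qed

lemma pi_pmf_ratio:
  assumes "finite I" "\<And>j. j \<in> I \<Longrightarrow> j \<noteq> k \<Longrightarrow> p j = p' j"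
    "\<And>x. pmf (p k) x \<le> c * pmf (p' k) x" "c \<ge> 1"
  shows "pmf (Pi_pmf I d p) r \<le> c * pmf (Pi_pmf I d p') r"
  using assms(4) by (auto simp: pmf_Pi assms(1) intro!: prod_ratio assms arg_cong[where f="\<lambda>q. pmf q _"])

lemma pmf_int_ratio:
  assumes "\<And>x. pmf p x \<le> c * pmf p' x" "c \<ge> 0"
  shows "(\<integral>\<^sup>+ x. f x \<partial>measure_pmf p) \<le> ennreal c * (\<integral>\<^sup>+ x. f x \<partial>measure_pmf p')"
proof -
  have "(\<integral>\<^sup>+ x. f x \<partial>measure_pmf p) = (\<integral>\<^sup>+ x. ennreal (pmf p x) * f x \<partial>count_space UNIV)"
    by (rule nn_integral_measure_pmf)
  also have "\<dots> \<le> (\<integral>\<^sup>+ x. ennreal c * (ennreal (pmf p' x) * f x) \<partial>count_space UNIV)"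
  proof (rule nn_integral_mono)
    fix x
    have "ennreal (pmf p x) \<le> ennreal (c * pmf p' x)" using assms(1) by (rule ennreal_leI)
    also have "\<dots> = ennreal c * ennreal (pmf p' x)" using assms(2) by (simp add: ennreal_mult)
    finally show "ennreal (pmf p x) * f x \<le> ennreal c * (ennreal (pmf p' x) * f x)"
      by (metis mult.assoc mult_right_mono zero_le)
  qed
  also have "\<dots> = ennreal c * (\<integral>\<^sup>+ x. ennreal (pmf p' x) * f x \<partial>count_space UNIV)"
    by (rule nn_integral_cmult) simp
  also have "\<dots> = ennreal c * (\<integral>\<^sup>+ x. f x \<partial>measure_pmf p')"
    by (simp add: nn_integral_measure_pmf)
  finally show ?thesis .
qed

lemma arr_ratio:
  assumes e: "eps \<ge> 0" and m0: "0 \<le> \<mu>" and m1: "\<mu> \<le> exp eps / (exp eps + 1)"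
  shows "pmf (ARR eps \<mu> b) x \<le> exp eps * pmf (ARR eps \<mu> b') x"
proof -
  define E where "E = exp eps"
  have E1: "E \<ge> 1" using e by (simp add: E_def)
  have rho: "exp (- eps) = 1 / E" by (simp add: E_def exp_minus field_simps)
  have mu1: "\<mu> \<le> 1"
  proof -
    have "exp eps / (exp eps + 1) \<le> 1" by (simp add: divide_le_eq add_pos_pos)
    thus ?thesis using m1 by linarith
  qed
  have mE: "\<mu> * (E + 1) \<le> E"
  proof -
    have "0 < exp eps + 1" by (simp add: add_pos_pos)
    thus ?thesis using m1 by (simp add: E_def le_divide_eq)
  qed
  have r1: "\<mu> / E \<le> \<mu>" using E1 m0 by (simp add: divide_le_eq mult_le_cancel_left1)
  have r0: "0 \<le> \<mu> / E" using E1 m0 by simp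
  have key: "1 - \<mu> / E \<le> E * (1 - \<mu>)"
  proof -
    have "(E - 1) * (\<mu> * (E + 1) - E) \<le> 0"
      using E1 mE by (intro mult_nonneg_nonpos) auto
    hence "E - \<mu> \<le> E * (E * (1 - \<mu>))" by (simp add: algebra_simps)
    hence "(E - \<mu>) / E \<le> E * (1 - \<mu>)" using E1 by (simp add: divide_le_eq mult.commute)
    thus ?thesis using E1 by (simp add: diff_divide_distrib)
  qed
  have pm: "pmf (ARR eps \<mu> b) x = (if x then (if b then \<mu> else \<mu> / E) else 1 - (if b then \<mu> else \<mu> / E))" for b
    using m0 mu1 r0 r1 by (auto simp: ARR_def rho)
  have c1: "\<mu> \<le> E * (\<mu> / E)" using E1 by simp
  have c2: "\<mu> / E \<le> E * \<mu>"
  proof -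
    have "\<mu> \<le> E * \<mu>" using E1 m0 by (simp add: mult_le_cancel_right1)
    thus ?thesis using r1 by linarith
  qed
  have c3: "1 - \<mu> \<le> E * (1 - \<mu> / E)"
  proof -
    have "1 - \<mu> / E \<le> E * (1 - \<mu> / E)" using E1 r1 mu1 by (simp add: mult_le_cancel_right1)
    thus ?thesis using r1 by linarith
  qed
  have c4: "1 - \<mu> \<le> E * (1 - \<mu>)" using E1 mu1 by (simp add: mult_le_cancel_right1)
  have c5: "\<mu> \<le> E * \<mu>" using E1 m0 by (simp add: mult_le_cancel_right1)
  have c6: "1 - \<mu>/E \<le> E * (1 - \<mu>/E)" using E1 r1 mu1 by (simp add: mult_le_cancel_right1)
  have c7: "\<mu>/E \<le> E * (\<mu>/E)"
  proof -
    have "1 * (\<mu>/E) \<le> E * (\<mu>/E)" by (rule mult_right_mono) (use E1 r0 in auto)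
    thus ?thesis by simp
  qed
  show ?thesis unfolding pm E_def[symmetric]
    apply (cases x; cases b; cases b')
    using key c1 c2 c3 c4 c5 c6 c7 by simp_all
qed

lemma round1_ratio:
  assumes "eps \<ge> 0" "0 \<le> \<mu>" "\<mu> \<le> exp eps / (exp eps + 1)"
    and agree: "\<And>j. j < i \<Longrightarrow> j \<noteq> k \<Longrightarrow> ai j = ai' j"
  shows "pmf (round1 eps \<mu> i ai) r \<le> exp eps * pmf (round1 eps \<mu> i ai') r"
  unfolding round1_def
  by (rule pi_pmf_ratio[where k=k]) (use assms arr_ratio in auto)

lemma round1_cong:
  assumes "\<And>j. j < i \<Longrightarrow> ai j = ai' j"
  shows "round1 eps \<mu> i ai = round1 eps \<mu> i ai'"
  unfolding round1_def using assms by (intro Pi_pmf_cong) auto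



definition Pset :: "nat \<Rightarrow> (nat \<Rightarrow> bool) \<Rightarrow> (nat \<times> nat) set" where
  "Pset i a = {(j, k). j < k \<and> k < i \<and> a j \<and> a k}"

lemma Pset_fin: "finite (Pset i a)"
  by (rule finite_subset[of _ "{..<i} \<times> {..<i}"]) (auto simp: Pset_def)

lemma s_eq: "s_count i a = card (Pset i a)"
  unfolding s_count_def Pset_def ..

lemma t_eq: "t_count i a M = card (Pset i a \<inter> M)"
  unfolding t_count_def Pset_def by (rule arg_cong[where f=card]) auto

lemma Pset_cong: "(\<And>j. j < i \<Longrightarrow> a j = a' j) \<Longrightarrow> Pset i a = Pset i a'"
  unfolding Pset_def by auto

lemma w_cong: "(\<And>j. j < i \<Longrightarrow> a j = a' j) \<Longrightarrow> w_val v e \<mu> i a M = w_val v e \<mu> i a' M"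
  unfolding w_val_def s_eq t_eq using Pset_cong by metis

lemma w_oneside:
  assumes "i \<le> n" "k < i" "a k" "\<not> a' k" "\<And>j. j < i \<Longrightarrow> j \<noteq> k \<Longrightarrow> a j = a' j"
    "0 \<le> c" "c \<le> 1"
  shows "\<bar>(real (card (Pset i a \<inter> M)) - c * real (card (Pset i a)))
          - (real (card (Pset i a' \<inter> M)) - c * real (card (Pset i a')))\<bar>
         \<le> real (card {j. j < n \<and> a j})"
proof -
  define Q where "Q = Pset i a - Pset i a'"
  have sub: "Pset i a' \<subseteq> Pset i a"
  proof
    fix x assume "x \<in> Pset i a'"
    then obtain j k' where x: "x = (j, k')" "j < k'" "k' < i" "a' j" "a' k'" unfolding Pset_def by auto
    have "j \<noteq> k" "k' \<noteq> k" using x assms(4) by auto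
    hence "a j" "a k'" using x assms(5)[of j] assms(5)[of k'] by auto
    thus "x \<in> Pset i a" using x unfolding Pset_def by auto
  qed
  have hQ: "j < k' \<and> k' < i \<and> a j \<and> a k' \<and> (j = k \<or> k' = k)" if "(j, k') \<in> Q" for j k'
  proof -
    have h: "j < k'" "k' < i" "a j" "a k'" "\<not> (a' j \<and> a' k')"
      using that unfolding Q_def Pset_def by auto
    show ?thesis
    proof (rule ccontr)
      assume "\<not> ?thesis"
      hence "j \<noteq> k" "k' \<noteq> k" using h by auto
      hence "a' j" "a' k'" using h assms(5)[of j] assms(5)[of k'] by auto
      thus False using h by auto
    qed
  qed
  have fQ: "finite Q" unfolding Q_def using Pset_fin by auto
  have c1: "card (Pset i a) = card (Pset i a') + card Q"
  proof -
    have "card Q = card (Pset i a) - card (Pset i a')" unfolding Q_def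
      using sub Pset_fin by (rule card_Diff_subset[rotated])
    moreover have "card (Pset i a') \<le> card (Pset i a)" using sub Pset_fin by (rule card_mono[rotated])
    ultimately show ?thesis by linarith
  qed
  have c2: "card (Pset i a \<inter> M) = card (Pset i a' \<inter> M) + card (Q \<inter> M)"
  proof -
    have "Pset i a \<inter> M = (Pset i a' \<inter> M) \<union> (Q \<inter> M)" "(Pset i a' \<inter> M) \<inter> (Q \<inter> M) = {}"
      unfolding Q_def using sub by auto
    thus ?thesis using Pset_fin fQ by (simp add: card_Un_disjoint)
  qed
  have c3: "card (Q \<inter> M) \<le> card Q" using fQ by (intro card_mono) auto
  have c4: "card Q \<le> card {j. j < n \<and> a j}"
  proof -
    let ?f = "\<lambda>(j, k'). if j = k then k' else j"
    have "inj_on ?f Q"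
    proof (rule inj_onI)
      fix x y assume x: "x \<in> Q" and y: "y \<in> Q" and e: "?f x = ?f y"
      obtain x1 x2 y1 y2 where xx: "x = (x1, x2)" and yy: "y = (y1, y2)" by fastforce
      have hx: "x1 < x2" "x2 < i" "x1 = k \<or> x2 = k"
        using hQ[of x1 x2] x unfolding xx by auto
      have hy: "y1 < y2" "y2 < i" "y1 = k \<or> y2 = k"
        using hQ[of y1 y2] y unfolding yy by auto
      show "x = y" using hx hy e unfolding xx yy by (auto split: if_splits)
    qed
    moreover have "?f ` Q \<subseteq> {j. j < n \<and> a j}"
      using assms(1) hQ by fastforce
    ultimately show ?thesis by (intro card_inj_on_le) auto
  qed
  have "real (card (Q \<inter> M)) - c * real (card Q) \<le> real (card Q)"
  proof -
    have "0 \<le> c * real (card Q)" using assms(6) by simp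
    moreover have "real (card (Q \<inter> M)) \<le> real (card Q)" using c3 by simp
    ultimately show ?thesis by linarith
  qed
  moreover have "- real (card Q) \<le> real (card (Q \<inter> M)) - c * real (card Q)"
  proof -
    have "c * real (card Q) \<le> 1 * real (card Q)" using assms(7) by (intro mult_right_mono) auto
    thus ?thesis by linarith
  qed
  moreover have "(real (card (Pset i a \<inter> M)) - c * real (card (Pset i a)))
          - (real (card (Pset i a' \<inter> M)) - c * real (card (Pset i a')))
         = real (card (Q \<inter> M)) - c * real (card Q)"
    using c1 c2 by (simp add: distrib_left)
  moreover have "real (card Q) \<le> real (card {j. j < n \<and> a j})" using c4 by simp
  ultimately show ?thesis by (simp only: abs_le_iff) linarith
qed

lemma w_sens:
  fixes d :: nat
  assumes i: "i \<le> n" and ag: "\<And>j. j < i \<Longrightarrow> j \<noteq> k \<Longrightarrow> a j = a' j"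
    and ca: "card {j. j < n \<and> a j} \<le> d" and ca': "card {j. j < n \<and> a' j} \<le> d"
    and c0: "0 \<le> mu_star v \<mu> * exp (- e)" and c1: "mu_star v \<mu> * exp (- e) \<le> 1"
  shows "\<bar>w_val v e \<mu> i a M - w_val v e \<mu> i a' M\<bar> \<le> real d"
proof (cases "k < i \<and> a k \<noteq> a' k")
  case False
  have "a j = a' j" if "j < i" for j
  proof (cases "j = k")
    case True thus ?thesis using False that by blast
  next
    case False thus ?thesis using ag that by blast
  qed
  hence "w_val v e \<mu> i a M = w_val v e \<mu> i a' M" by (rule w_cong)
  thus ?thesis by simp
next
  case True
  let ?c = "mu_star v \<mu> * exp (- e)"
  have W: "w_val v e \<mu> i x M = real (card (Pset i x \<inter> M)) - ?c * real (card (Pset i x))" for x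
    unfolding w_val_def s_eq t_eq by simp
  show ?thesis
  proof (cases "a k")
    case True2: True
    have nk: "\<not> a' k" using True True2 by blast
    have "\<bar>w_val v e \<mu> i a M - w_val v e \<mu> i a' M\<bar> \<le> real (card {j. j < n \<and> a j})"
      unfolding W using w_oneside[of i n k a a' ?c M] i True2 nk ag c0 c1 True by blast
    thus ?thesis using ca by linarith
  next
    case False
    have nk: "a' k" using True False by blast
    have ag': "\<And>j. j < i \<Longrightarrow> j \<noteq> k \<Longrightarrow> a' j = a j" using ag by metis
    have "\<bar>w_val v e \<mu> i a' M - w_val v e \<mu> i a M\<bar> \<le> real (card {j. j < n \<and> a' j})"
      unfolding W using w_oneside[of i n k a' a ?c M] i nk False ag' c0 c1 True by blast
    thus ?thesis using ca' by linarith
  qed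
qed



lemma emeas_to_meas:
  assumes "emeasure M S \<le> ennreal c * emeasure M' S" "emeasure M' S < \<top>" "c \<ge> 0"
  shows "measure M S \<le> c * measure M' S"
proof -
  have "measure M S = enn2real (emeasure M S)" by (simp add: measure_def)
  also have "\<dots> \<le> enn2real (ennreal c * emeasure M' S)"
    using assms by (intro enn2real_mono) (auto simp: ennreal_mult_less_top)
  also have "\<dots> = c * measure M' S" using assms(3) by (simp add: enn2real_mult measure_def)
  finally show ?thesis .
qed

lemma pim_ratio:
  fixes N N' :: "'i \<Rightarrow> 'a measure"
  assumes kI: "k \<in> I"
    and P: "\<And>i. i \<in> I \<Longrightarrow> prob_space (N i)" "\<And>i. i \<in> I \<Longrightarrow> prob_space (N' i)"
    and eq: "\<And>i. i \<in> I \<Longrightarrow> i \<noteq> k \<Longrightarrow> N i = N' i"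
    and sk: "sets (N k) = sets (N' k)"
    and r: "\<And>A. A \<in> sets (N k) \<Longrightarrow> emeasure (N k) A \<le> ennreal c * emeasure (N' k) A"
    and T: "T \<in> sets (PiM I N)"
  shows "emeasure (PiM I N) T \<le> ennreal c * emeasure (PiM I N') T"
proof -
  define J where "J = I - {k}"
  have I: "insert k J = I" using kI by (auto simp: J_def)
  define R where "R = PiM J N"
  have RR: "PiM J N' = R" unfolding R_def using eq by (intro PiM_cong) (auto simp: J_def)
  define f :: "'a \<times> ('i \<Rightarrow> 'a) \<Rightarrow> ('i \<Rightarrow> 'a)" where "f = (\<lambda>(x, X). X(k := x))"
  have D: "distr (N k \<Otimes>\<^sub>M R) (PiM I N) f = PiM I N"
    using distr_pair_PiM_eq_PiM[of J N k] P kI unfolding R_def f_def I by (auto simp: J_def)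
  have D': "distr (N' k \<Otimes>\<^sub>M R) (PiM I N') f = PiM I N'"
    using distr_pair_PiM_eq_PiM[of J N' k] P kI unfolding RR[symmetric] f_def I by (auto simp: J_def)
  have fm: "f \<in> measurable (M \<Otimes>\<^sub>M PiM J M') (PiM (insert k J) M')" if "M = M' k" for M M'
  proof -
    have "(\<lambda>(x, y). (y, x)) \<in> measurable (M' k \<Otimes>\<^sub>M PiM J M') (PiM J M' \<Otimes>\<^sub>M M' k)"
      by (rule measurable_pair_swap')
    from measurable_comp[OF this measurable_add_dim[of k J M']]
    show ?thesis unfolding f_def that by (simp add: o_def case_prod_beta)
  qed
  have fm1: "f \<in> measurable (N k \<Otimes>\<^sub>M R) (PiM I N)" using fm[of "N k" N] unfolding R_def I by simp
  have fm2: "f \<in> measurable (N' k \<Otimes>\<^sub>M R) (PiM I N')" using fm[of "N' k" N'] unfolding RR[symmetric] I by simp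
  have sPi: "sets (PiM I N) = sets (PiM I N')"
  proof -
    have "\<And>i. i \<in> I \<Longrightarrow> sets (N i) = sets (N' i)" using eq sk by metis
    thus ?thesis by (rule sets_PiM_cong[OF refl])
  qed
  have spPi: "space (PiM I N) = space (PiM I N')" using sPi by (rule sets_eq_imp_space_eq)
  have spk: "space (N k) = space (N' k)" using sk by (rule sets_eq_imp_space_eq)
  have sppair: "space (N k \<Otimes>\<^sub>M R) = space (N' k \<Otimes>\<^sub>M R)" by (simp add: space_pair_measure spk)
  define U where "U = f -` T \<inter> space (N k \<Otimes>\<^sub>M R)"
  have U: "U \<in> sets (N k \<Otimes>\<^sub>M R)" unfolding U_def using fm1 T by (rule measurable_sets)
  have U': "U \<in> sets (N' k \<Otimes>\<^sub>M R)" using U sk by simp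
  interpret Pk: prob_space "N k" using P kI by auto
  interpret Pk': prob_space "N' k" using P kI by auto
  interpret PR: prob_space R unfolding R_def using P by (intro prob_space_PiM) (auto simp: J_def)
  interpret S1: pair_sigma_finite "N k" R ..
  interpret S2: pair_sigma_finite "N' k" R ..
  have "emeasure (PiM I N) T = emeasure (distr (N k \<Otimes>\<^sub>M R) (PiM I N) f) T" by (simp add: D)
  also have "\<dots> = emeasure (N k \<Otimes>\<^sub>M R) U" unfolding U_def by (rule emeasure_distr[OF fm1 T])
  also have "\<dots> = (\<integral>\<^sup>+y. emeasure (N k) ((\<lambda>x. (x, y)) -` U) \<partial>R)"
    by (rule S1.emeasure_pair_measure_alt2[OF U])
  also have "\<dots> \<le> (\<integral>\<^sup>+y. ennreal c * emeasure (N' k) ((\<lambda>x. (x, y)) -` U) \<partial>R)"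
    by (intro nn_integral_mono r sets_Pair2[OF U])
  also have "\<dots> = ennreal c * (\<integral>\<^sup>+y. emeasure (N' k) ((\<lambda>x. (x, y)) -` U) \<partial>R)"
    by (intro nn_integral_cmult S2.measurable_emeasure_Pair2 U')
  also have "(\<integral>\<^sup>+y. emeasure (N' k) ((\<lambda>x. (x, y)) -` U) \<partial>R) = emeasure (N' k \<Otimes>\<^sub>M R) U"
    by (rule S2.emeasure_pair_measure_alt2[OF U', symmetric])
  also have "U = f -` T \<inter> space (N' k \<Otimes>\<^sub>M R)" unfolding U_def sppair ..
  also have "emeasure (N' k \<Otimes>\<^sub>M R) \<dots> = emeasure (distr (N' k \<Otimes>\<^sub>M R) (PiM I N') f) T"
    using T sPi by (intro emeasure_distr[symmetric] fm2) auto
  also have "\<dots> = emeasure (PiM I N') T" by (simp add: D')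
  finally show ?thesis .
qed



lemma r2_prob:
  assumes "dmax > 0" "eps2 > 0"
  shows "prob_space (round2 v eps1 eps2 \<mu> dmax i M a)"
proof -
  have b: "real dmax / eps2 > 0" using assms by simp
  interpret L: prob_space "laplace (real dmax / eps2)" by (rule lap_prob[OF b])
  show ?thesis unfolding round2_def
    by (rule L.prob_space_distr) (use b in \<open>simp add: laplace_def\<close>)
qed

lemma r2_sets: "sets (round2 v eps1 eps2 \<mu> dmax i M a) = sets borel"
  unfolding round2_def by simp

lemma r2_ratio:
  assumes d: "dmax > 0" and e: "eps2 > 0"
    and w: "\<bar>w_val v eps1 \<mu> i a M - w_val v eps1 \<mu> i a' M\<bar> \<le> real dmax"
    and A: "A \<in> sets borel"
  shows "emeasure (round2 v eps1 eps2 \<mu> dmax i M a) A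
       \<le> ennreal (exp eps2) * emeasure (round2 v eps1 eps2 \<mu> dmax i M a') A"
  unfolding round2_def
proof (rule lap_shift[OF _ _ A])
  show "real dmax / eps2 > 0" using d e by simp
  show "\<bar>w_val v eps1 \<mu> i a M - w_val v eps1 \<mu> i a' M\<bar> \<le> real dmax / eps2 * eps2"
    using w e by simp
qed

lemma cbounds:
  assumes "0 \<le> \<mu>" "\<mu> \<le> 1" "e \<ge> 0"
  shows "0 \<le> mu_star v \<mu> * exp (- e)" "mu_star v \<mu> * exp (- e) \<le> 1"
proof -
  have m: "0 \<le> mu_star v \<mu> \<and> mu_star v \<mu> \<le> 1"
    using assms by (cases v) (auto simp: mu_star_def power_le_one)
  have x: "0 < exp (- e)" "exp (- e) \<le> 1" using assms by auto
  show "0 \<le> mu_star v \<mu> * exp (- e)" using m x by simp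
  have "mu_star v \<mu> * exp (- e) \<le> 1 * 1" using m x by (intro mult_mono) auto
  thus "mu_star v \<mu> * exp (- e) \<le> 1" by simp
qed

lemma mu_le1: "(\<mu>::real) \<le> exp eps1 / (exp eps1 + 1) \<Longrightarrow> \<mu> \<le> 1"
proof -
  assume "\<mu> \<le> exp eps1 / (exp eps1 + 1)"
  moreover have "exp eps1 / (exp eps1 + 1) \<le> 1"
  proof -
    have p: "0 < exp eps1 + 1" by (simp add: add_pos_pos)
    thus ?thesis by (simp add: divide_le_eq)
  qed
  ultimately show ?thesis by linarith
qed



lemma edge_part:
  fixes v :: variant and n dmax :: nat and eps1 eps2 \<mu> :: real
  assumes e1: "eps1 \<ge> 0" and e2: "eps2 > 0"
    and m0: "0 \<le> \<mu>" and m1: "\<mu> \<le> exp eps1 / (exp eps1 + 1)"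
    and i: "i < n"
  shows "edge_LDP n (eps1 + eps2) {ai. card {j. j < n \<and> ai j} \<le> dmax}
                       (user_rand v eps1 eps2 \<mu> dmax i M)"
  unfolding edge_LDP_def
proof (intro ballI impI)
  fix a a' S
  assume a: "a \<in> {ai. card {j. j < n \<and> ai j} \<le> dmax}" and a': "a' \<in> {ai. card {j. j < n \<and> ai j} \<le> dmax}"
    and rd: "rows_differ_one n a a'" and S: "S \<in> sets (user_rand v eps1 eps2 \<mu> dmax i M a)"
  have ca: "card {j. j < n \<and> a j} \<le> dmax" and ca': "card {j. j < n \<and> a' j} \<le> dmax" using a a' by auto
  obtain k where k: "k < n" "a k \<noteq> a' k" and ag: "\<And>j. j < n \<Longrightarrow> j \<noteq> k \<Longrightarrow> a j = a' j"
    using rd unfolding rows_differ_one_def by blast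
  have dpos: "dmax > 0"
  proof (cases "a k")
    case True
    hence "k \<in> {j. j < n \<and> a j}" using k by auto
    hence "card {j. j < n \<and> a j} > 0" by (intro card_gt_0_iff[THEN iffD2]) auto
    thus ?thesis using ca by linarith
  next
    case False
    hence "k \<in> {j. j < n \<and> a' j}" using k by auto
    hence "card {j. j < n \<and> a' j} > 0" by (intro card_gt_0_iff[THEN iffD2]) auto
    thus ?thesis using ca' by linarith
  qed
  have ag': "\<And>j. j < i \<Longrightarrow> j \<noteq> k \<Longrightarrow> a j = a' j" using ag i by auto
  have cb: "0 \<le> mu_star v \<mu> * exp (- eps1)" "mu_star v \<mu> * exp (- eps1) \<le> 1"
    using cbounds[OF m0 mu_le1[OF m1] e1] by auto
  have wd: "\<bar>w_val v eps1 \<mu> i a M - w_val v eps1 \<mu> i a' M\<bar> \<le> real dmax"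
    using w_sens[of i n k a a' dmax v \<mu> eps1 M] i ag' ca ca' cb by auto
  let ?p = "round1 eps1 \<mu> i a" and ?p' = "round1 eps1 \<mu> i a'"
  let ?R = "round2 v eps1 eps2 \<mu> dmax i M a" and ?R' = "round2 v eps1 eps2 \<mu> dmax i M a'"
  interpret R: prob_space ?R by (rule r2_prob[OF dpos e2])
  interpret R': prob_space ?R' by (rule r2_prob[OF dpos e2])
  have S1: "S \<in> sets (measure_pmf ?p \<Otimes>\<^sub>M ?R)" using S unfolding user_rand_def .
  have "sets (measure_pmf ?p \<Otimes>\<^sub>M ?R) = sets (measure_pmf ?p' \<Otimes>\<^sub>M ?R')"
    by (rule sets_pair_measure_cong) (simp_all add: r2_sets)
  hence S2: "S \<in> sets (measure_pmf ?p' \<Otimes>\<^sub>M ?R')" using S1 by simp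
  have pr: "\<And>x. pmf ?p x \<le> exp eps1 * pmf ?p' x"
    by (rule round1_ratio[OF e1 m0 m1 ag'])
  have "emeasure (user_rand v eps1 eps2 \<mu> dmax i M a) S
      = (\<integral>\<^sup>+x. emeasure ?R (Pair x -` S) \<partial>measure_pmf ?p)"
    unfolding user_rand_def by (rule R.emeasure_pair_measure_alt[OF S1])
  also have "\<dots> \<le> (\<integral>\<^sup>+x. ennreal (exp eps2) * emeasure ?R' (Pair x -` S) \<partial>measure_pmf ?p)"
  proof (rule nn_integral_mono)
    fix x
    have "Pair x -` S \<in> sets ?R" by (rule sets_Pair1[OF S1])
    hence "Pair x -` S \<in> sets borel" by (simp add: r2_sets)
    thus "emeasure ?R (Pair x -` S) \<le> ennreal (exp eps2) * emeasure ?R' (Pair x -` S)"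
      by (rule r2_ratio[OF dpos e2 wd])
  qed
  also have "\<dots> = ennreal (exp eps2) * (\<integral>\<^sup>+x. emeasure ?R' (Pair x -` S) \<partial>measure_pmf ?p)"
    by (rule nn_integral_cmult) simp
  also have "\<dots> \<le> ennreal (exp eps2) * (ennreal (exp eps1) * (\<integral>\<^sup>+x. emeasure ?R' (Pair x -` S) \<partial>measure_pmf ?p'))"
    by (intro mult_left_mono pmf_int_ratio pr) auto
  also have "(\<integral>\<^sup>+x. emeasure ?R' (Pair x -` S) \<partial>measure_pmf ?p') = emeasure (user_rand v eps1 eps2 \<mu> dmax i M a') S"
    unfolding user_rand_def by (rule R'.emeasure_pair_measure_alt[OF S2, symmetric])
  also have "ennreal (exp eps2) * (ennreal (exp eps1) * emeasure (user_rand v eps1 eps2 \<mu> dmax i M a') S)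
      = ennreal (exp (eps1 + eps2)) * emeasure (user_rand v eps1 eps2 \<mu> dmax i M a') S"
    by (simp add: exp_add ennreal_mult mult.assoc mult.left_commute)
  finally have le: "emeasure (user_rand v eps1 eps2 \<mu> dmax i M a) S
      \<le> ennreal (exp (eps1 + eps2)) * emeasure (user_rand v eps1 eps2 \<mu> dmax i M a') S" .
  interpret U': prob_space "user_rand v eps1 eps2 \<mu> dmax i M a'"
    unfolding user_rand_def by (intro prob_space_pair prob_space_measure_pmf r2_prob dpos e2)
  show "measure (user_rand v eps1 eps2 \<mu> dmax i M a) S \<le> exp (eps1 + eps2) * measure (user_rand v eps1 eps2 \<mu> dmax i M a') S"
    by (rule emeas_to_meas[OF le]) (auto simp: U'.emeasure_finite less_top[symmetric])
qed



lemma rel_part: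
  fixes v :: variant and n dmax :: nat and eps1 eps2 \<mu> :: real
  assumes e1: "eps1 \<ge> 0" and e2: "eps2 > 0"
    and m0: "0 \<le> \<mu>" and m1: "\<mu> \<le> exp eps1 / (exp eps1 + 1)"
  shows "relationship_DP n dmax (eps1 + eps2) (protocol v eps1 eps2 \<mu> dmax n)"
  unfolding relationship_DP_def
proof (intro allI impI ballI)
  fix A A' :: "nat \<Rightarrow> nat \<Rightarrow> bool" and S
  assume H: "simple_graph n A \<and> simple_graph n A' \<and> max_deg_le n dmax A \<and> max_deg_le n dmax A'
        \<and> graphs_differ_one_edge n A A'"
    and S: "S \<in> sets (protocol v eps1 eps2 \<mu> dmax n A)"
  have G: "graphs_differ_one_edge n A A'" using H by (elim conjE)
  then obtain u w where uw: "u < n" "w < n" "u \<noteq> w" "A u w \<noteq> A' u w"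
    and oth0: "\<forall>i<n. \<forall>j<n. {i, j} \<noteq> {u, w} \<longrightarrow> A i j = A' i j"
    unfolding graphs_differ_one_edge_def by (elim exE conjE) (rule that; assumption)
  have oth: "\<And>i j. i < n \<Longrightarrow> j < n \<Longrightarrow> {i, j} \<noteq> {u, w} \<Longrightarrow> A i j = A' i j"
    using oth0 by simp
  have deg: "\<And>i. i < n \<Longrightarrow> card {j. j < n \<and> A i j} \<le> dmax"
    "\<And>i. i < n \<Longrightarrow> card {j. j < n \<and> A' i j} \<le> dmax"
    using H unfolding max_deg_le_def by auto
  have dpos: "dmax > 0"
  proof (cases "A u w")
    case True
    hence "w \<in> {j. j < n \<and> A u j}" using uw by auto
    hence "card {j. j < n \<and> A u j} > 0" by (intro card_gt_0_iff[THEN iffD2]) auto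
    thus ?thesis using deg(1)[OF uw(1)] by linarith
  next
    case False
    hence "w \<in> {j. j < n \<and> A' u j}" using uw by auto
    hence "card {j. j < n \<and> A' u j} > 0" by (intro card_gt_0_iff[THEN iffD2]) auto
    thus ?thesis using deg(2)[OF uw(1)] by linarith
  qed
  define hi where "hi = max u w"
  define lo where "lo = min u w"
  have hin: "hi < n" using uw by (simp add: hi_def)
  have F1: "\<And>i j. i < n \<Longrightarrow> i \<noteq> hi \<Longrightarrow> j < i \<Longrightarrow> A i j = A' i j"
  proof -
    fix i j assume "i < n" "i \<noteq> hi" "j < i"
    moreover have "{i, j} \<noteq> {u, w}"
    proof
      assume "{i, j} = {u, w}"
      hence "(i = u \<and> j = w) \<or> (i = w \<and> j = u)" by (metis doubleton_eq_iff)
      thus False using \<open>i \<noteq> hi\<close> \<open>j < i\<close> by (auto simp: hi_def)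
    qed
    ultimately show "A i j = A' i j" using oth[of i j] by simp
  qed
  have F2: "\<And>j. j < hi \<Longrightarrow> j \<noteq> lo \<Longrightarrow> A hi j = A' hi j"
  proof -
    fix j assume j: "j < hi" "j \<noteq> lo"
    have "{hi, j} \<noteq> {u, w}"
    proof
      assume "{hi, j} = {u, w}"
      hence "(hi = u \<and> j = w) \<or> (hi = w \<and> j = u)" by (metis doubleton_eq_iff)
      thus False using j by (auto simp: hi_def lo_def)
    qed
    thus "A hi j = A' hi j" using oth[of hi j] hin j by simp
  qed
  have cb: "0 \<le> mu_star v \<mu> * exp (- eps1)" "mu_star v \<mu> * exp (- eps1) \<le> 1"
    using cbounds[OF m0 mu_le1[OF m1] e1] by auto
  define Q where "Q X = Pi_pmf {..<n} (\<lambda>_. False) (\<lambda>i. round1 eps1 \<mu> i (X i))" for X :: "nat \<Rightarrow> nat \<Rightarrow> bool"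
  define NN where "NN X r i = round2 v eps1 eps2 \<mu> dmax i (message v i (noisy_edges n r)) (X i)"
    for X :: "nat \<Rightarrow> nat \<Rightarrow> bool" and r i
  define \<Sigma> :: "((nat \<Rightarrow> nat \<Rightarrow> bool) \<times> (nat \<Rightarrow> real)) measure"
    where "\<Sigma> = (count_space UNIV \<Otimes>\<^sub>M PiM {..<n} (\<lambda>_. borel))"
  define K where "K X r = distr (PiM {..<n} (NN X r)) \<Sigma> (\<lambda>w. (r, w))" for X r
  have P: "\<And>X. protocol v eps1 eps2 \<mu> dmax n X = measure_pmf (Q X) \<bind> K X"
    unfolding protocol_def Q_def K_def NN_def \<Sigma>_def ..
  have NNp: "\<And>X r i. prob_space (NN X r i)" unfolding NN_def by (rule r2_prob[OF dpos e2])
  have NNs: "\<And>X r i. sets (NN X r i) = sets borel" unfolding NN_def by (rule r2_sets)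
  have sPi: "\<And>X r. sets (PiM {..<n} (NN X r)) = sets (PiM {..<n} (\<lambda>_. borel))"
    using NNs by (intro sets_PiM_cong) auto
  have mw: "\<And>X r. (\<lambda>w. (r, w)) \<in> measurable (PiM {..<n} (NN X r)) \<Sigma>"
    unfolding \<Sigma>_def
    by (intro measurable_Pair measurable_const measurable_ident_sets sPi) auto
  have Kp: "\<And>X r. prob_space (K X r)" unfolding K_def
    by (intro prob_space.prob_space_distr prob_space_PiM NNp mw)
  have Ks: "\<And>X r. sets (K X r) = sets \<Sigma>" unfolding K_def by simp
  have Km: "\<And>X. K X \<in> measurable (measure_pmf (Q X)) (subprob_algebra \<Sigma>)"
    using Kp Ks by (auto simp: space_subprob_algebra prob_space_imp_subprob_space)
  have sP: "\<And>X. sets (protocol v eps1 eps2 \<mu> dmax n X) = sets \<Sigma>"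
    unfolding P using Ks by (intro sets_bind) auto
  have S': "S \<in> sets \<Sigma>" using S sP by auto
  have EB: "\<And>X. emeasure (protocol v eps1 eps2 \<mu> dmax n X) S = (\<integral>\<^sup>+r. emeasure (K X r) S \<partial>measure_pmf (Q X))"
    unfolding P by (rule emeasure_bind[OF _ Km S']) simp
  have Qr: "\<And>r. pmf (Q A) r \<le> exp eps1 * pmf (Q A') r"
    unfolding Q_def
  proof (rule pi_pmf_ratio[where k=hi])
    show "\<And>j. j \<in> {..<n} \<Longrightarrow> j \<noteq> hi \<Longrightarrow> round1 eps1 \<mu> j (A j) = round1 eps1 \<mu> j (A' j)"
      using F1 by (intro round1_cong) auto
    show "\<And>x. pmf (round1 eps1 \<mu> hi (A hi)) x \<le> exp eps1 * pmf (round1 eps1 \<mu> hi (A' hi)) x"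
      using F2 by (intro round1_ratio[OF e1 m0 m1]) auto
  qed (use e1 in auto)
  have Kr: "emeasure (K A r) S \<le> ennreal (exp eps2) * emeasure (K A' r) S" for r
  proof -
    have spe: "space (PiM {..<n} (NN A r)) = space (PiM {..<n} (NN A' r))"
      using sPi by (metis sets_eq_imp_space_eq)
    define T where "T = (\<lambda>w. (r, w)) -` S \<inter> space (PiM {..<n} (NN A r))"
    have T: "T \<in> sets (PiM {..<n} (NN A r))" unfolding T_def by (rule measurable_sets[OF mw S'])
    have "emeasure (K A r) S = emeasure (PiM {..<n} (NN A r)) T"
      unfolding K_def T_def by (rule emeasure_distr[OF mw S'])
    also have "\<dots> \<le> ennreal (exp eps2) * emeasure (PiM {..<n} (NN A' r)) T"
    proof (rule pim_ratio[where k=hi, OF _ _ _ _ _ _ T])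
      show "hi \<in> {..<n}" using hin by simp
      show "\<And>i. i \<in> {..<n} \<Longrightarrow> i \<noteq> hi \<Longrightarrow> NN A r i = NN A' r i"
        unfolding NN_def round2_def using F1 by (subst w_cong[where a'="A' _"]) auto
      show "sets (NN A r hi) = sets (NN A' r hi)" by (simp add: NNs)
      fix B assume B: "B \<in> sets (NN A r hi)"
      have wd: "\<bar>w_val v eps1 \<mu> hi (A hi) (message v hi (noisy_edges n r))
                 - w_val v eps1 \<mu> hi (A' hi) (message v hi (noisy_edges n r))\<bar> \<le> real dmax"
        using w_sens[of hi n lo "A hi" "A' hi" dmax v \<mu> eps1] hin F2 deg[OF hin] cb by auto
      show "emeasure (NN A r hi) B \<le> ennreal (exp eps2) * emeasure (NN A' r hi) B"
        unfolding NN_def by (rule r2_ratio[OF dpos e2 wd]) (use B NNs in auto)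
    qed (auto intro: NNp)
    also have "emeasure (PiM {..<n} (NN A' r)) T = emeasure (K A' r) S"
      unfolding K_def T_def spe by (rule emeasure_distr[OF mw S', symmetric])
    finally show ?thesis .
  qed
  have "emeasure (protocol v eps1 eps2 \<mu> dmax n A) S
       \<le> (\<integral>\<^sup>+r. ennreal (exp eps2) * emeasure (K A' r) S \<partial>measure_pmf (Q A))"
    unfolding EB by (intro nn_integral_mono Kr)
  also have "\<dots> = ennreal (exp eps2) * (\<integral>\<^sup>+r. emeasure (K A' r) S \<partial>measure_pmf (Q A))"
    by (rule nn_integral_cmult) simp
  also have "\<dots> \<le> ennreal (exp eps2) * (ennreal (exp eps1) * (\<integral>\<^sup>+r. emeasure (K A' r) S \<partial>measure_pmf (Q A')))"
    by (intro mult_left_mono pmf_int_ratio Qr) auto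
  also have "\<dots> = ennreal (exp (eps1 + eps2)) * emeasure (protocol v eps1 eps2 \<mu> dmax n A') S"
    unfolding EB by (simp add: exp_add ennreal_mult mult.assoc mult.left_commute)
  finally have le: "emeasure (protocol v eps1 eps2 \<mu> dmax n A) S
     \<le> ennreal (exp (eps1 + eps2)) * emeasure (protocol v eps1 eps2 \<mu> dmax n A') S" .
  have fin: "emeasure (protocol v eps1 eps2 \<mu> dmax n A') S < \<top>"
  proof -
    have "emeasure (protocol v eps1 eps2 \<mu> dmax n A') S \<le> (\<integral>\<^sup>+r. 1 \<partial>measure_pmf (Q A'))"
      unfolding EB
    proof (rule nn_integral_mono)
      fix r
      interpret KP: prob_space "K A' r" by (rule Kp)
      show "emeasure (K A' r) S \<le> 1" by (rule KP.emeasure_le_1)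
    qed
    also have "\<dots> = 1" by (simp add: measure_pmf.emeasure_space_1)
    finally show ?thesis by (simp add: order_le_less_trans)
  qed
  show "measure (protocol v eps1 eps2 \<mu> dmax n A) S \<le> exp (eps1 + eps2) * measure (protocol v eps1 eps2 \<mu> dmax n A') S"
    by (rule emeas_to_meas[OF le fin]) simp
qed


theorem theorem4p1:
  fixes v :: variant and n dmax :: nat and eps1 eps2 \<mu> :: real
  assumes "eps1 \<ge> 0" and "eps2 > 0"
    and "0 \<le> \<mu>" and "\<mu> \<le> exp eps1 / (exp eps1 + 1)"
  shows "(\<forall>i<n. \<forall>M. edge_LDP n (eps1 + eps2) {ai. card {j. j < n \<and> ai j} \<le> dmax}
                       (user_rand v eps1 eps2 \<mu> dmax i M))
         \<and> relationship_DP n dmax (eps1 + eps2) (protocol v eps1 eps2 \<mu> dmax n)"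
  using edge_part[OF assms] rel_part[OF assms] by blast

end
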